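(* Let $n\ge 3$ and let $P\subset\mathbb R^n$ be a polytope with $rB_2^n\subset P$ for some $r$ with $\frac{3\sqrt3}{\sqrt n}\le r\le 1$. Let $N=N(P,B_2^n)$ and let $\mathcal F$ be the set of facets of $P$. If $3\le N< e^{n/8}$, then \[ |\mathcal F|>\left(\frac{1}{2\left(1-r\sqrt{1-\frac{4\log N}{n}}\right)}\right)^{\frac{n-1}{2}}. \]
   Context: $B_2^n$ is the closed Euclidean unit ball in $\mathbb R^n$ centered at $0$. A polytope is the convex hull of finitely many points; a facet is an $(n-1)$-dimensional face. For convex bodies $K,T$, the covering number is $N(K,T)=\min\{N:\exists x_1,\dots,x_N\in\mathbb R^n,\ K\subset\bigcup_{i=1}^N(x_i+T)\}$. $\log$ is the natural logarithm. *)

theory Defs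
  imports "HOL-Analysis.Analysis"
begin

definition covering_number :: "'a::euclidean_space set \<Rightarrow> 'a set \<Rightarrow> nat" where
  "covering_number K T =
     (LEAST N. \<exists>X. finite X \<and> card X = N \<and> K \<subseteq> (\<Union>x\<in>X. (\<lambda>y. x + y) ` T))"

end

theory Submission
  imports Defs
begin

lemma arith_bound:
  fixes t :: real and n :: nat
  assumes "0 < t" "t < 1" "n \<ge> 1"
  shows "4 * t * (1 - t) ^ n < 4 / n"
proof -
  have b: "1 + real n * t \<le> (1 + t) ^ n"
    using Bernoulli_inequality[of t n] assms by simp
  have "(1 - t) ^ n * (1 + t) ^ n = (1 - t^2) ^ n"
    by (simp add: power_mult_distrib[symmetric] power2_eq_square algebra_simps)
  also have "\<dots> \<le> 1"
    using assms by (intro power_le_one) (auto simp: power2_eq_square mult_le_one)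
  finally have c: "(1 - t) ^ n * (1 + t) ^ n \<le> 1" .
  have "(1 - t) ^ n * (1 + real n * t) \<le> (1 - t) ^ n * (1 + t) ^ n"
    using b assms by (intro mult_left_mono) auto
  with c have d: "(1 - t) ^ n * (1 + real n * t) \<le> 1" by linarith
  have pos: "0 < 1 + real n * t" using assms by (simp add: add_pos_nonneg)
  have "(1 - t) ^ n \<le> 1 / (1 + real n * t)"
    using d pos by (simp add: field_simps)
  hence "4 * t * (1 - t) ^ n \<le> 4 * t / (1 + real n * t)"
    using assms by (simp add: divide_simps) (smt (verit) mult_left_mono pos)
  also have "\<dots> < 4 / n"
    using assms pos by (simp add: divide_simps)
  finally show ?thesis .
qed

lemma cap_in_ball:
  fixes z u :: "'a::euclidean_space"
  assumes "norm u = 1" "0 \<le> r" "r \<le> R" "norm z \<le> R" "r \<le> u \<bullet> z"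
  shows "z \<in> cball (r *\<^sub>R u) (sqrt (R^2 - r^2))"
proof -
  have uu: "u \<bullet> u = 1" using assms(1) by (simp add: norm_eq_1)
  have "(dist (r *\<^sub>R u) z)^2 = (r *\<^sub>R u - z) \<bullet> (r *\<^sub>R u - z)"
    by (simp only: dist_norm power2_norm_eq_inner)
  also have "\<dots> = r^2 * (u \<bullet> u) - 2 * r * (u \<bullet> z) + z \<bullet> z"
    by (simp add: inner_diff_left inner_diff_right inner_commute[of z u] power2_eq_square algebra_simps)
  also have "\<dots> = (norm z)^2 - 2 * r * (u \<bullet> z) + r^2"
    using uu by (simp add: power2_norm_eq_inner)
  also have "\<dots> \<le> R^2 - r^2"
  proof -
    have "(norm z)^2 \<le> R^2" using assms by (simp add: power_mono)
    moreover have "r * r \<le> r * (u \<bullet> z)" using assms by (simp add: mult_left_mono)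
    ultimately show ?thesis by (simp add: power2_eq_square)
  qed
  finally show ?thesis
    by (simp add: real_le_rsqrt)
qed

lemma final_ineq:
  fixes t :: real and n :: nat
  assumes "0 < t" "t < 1/2" "n \<ge> 9"
  shows "(1 / (4 * t)) powr ((real n - 1) / 2) * sqrt (4 * t * (1 - t)) ^ n < 2 / 3"
proof -
  define w where "w = (1 / (4 * t)) powr ((real n - 1) / 2) * sqrt (4 * t * (1 - t)) ^ n"
  have w0: "w \<ge> 0" unfolding w_def using assms by simp
  have p1: "((1 / (4 * t)) powr ((real n - 1) / 2)) ^ 2 = (1 / (4 * t)) ^ (n - 1)"
  proof -
    have "((1 / (4 * t)) powr ((real n - 1) / 2)) ^ 2 = (1 / (4 * t)) powr (real 2 * ((real n - 1) / 2))"
      using assms by (subst powr_power) auto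
    also have "real 2 * ((real n - 1) / 2) = real (n - 1)" using assms by (simp add: of_nat_diff)
    also have "(1 / (4 * t)) powr real (n - 1) = (1 / (4 * t)) ^ (n - 1)"
      using assms by (intro powr_realpow) simp
    finally show ?thesis .
  qed
  have p2: "(sqrt (4 * t * (1 - t)) ^ n) ^ 2 = (4 * t * (1 - t)) ^ n"
  proof -
    have "(sqrt (4 * t * (1 - t)) ^ n) ^ 2 = (sqrt (4 * t * (1 - t)) ^ 2) ^ n"
      by (metis power_mult mult.commute)
    also have "\<dots> = (4 * t * (1 - t)) ^ n" using assms by simp
    finally show ?thesis .
  qed
  have e4: "(4 * t) ^ n = (4 * t) ^ (n - 1) * (4 * t)"
    using assms by (cases n) (auto simp: mult.commute)
  have e5: "(1 / (4 * t)) ^ (n - 1) * (4 * t) ^ (n - 1) = 1"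
    using assms by (simp add: power_one_over)
  have "w ^ 2 = ((1 / (4 * t)) powr ((real n - 1) / 2)) ^ 2 * (sqrt (4 * t * (1 - t)) ^ n) ^ 2"
    unfolding w_def by (simp only: power_mult_distrib)
  also have "\<dots> = (1 / (4 * t)) ^ (n - 1) * ((4 * t) ^ n * (1 - t) ^ n)"
    by (simp only: p1 p2 power_mult_distrib)
  also have "\<dots> = ((1 / (4 * t)) ^ (n - 1) * (4 * t) ^ (n - 1)) * (4 * t) * (1 - t) ^ n"
    by (simp only: e4 mult.assoc)
  also have "\<dots> = 4 * t * (1 - t) ^ n"
    by (simp only: e5 mult_1_left)
  also have "\<dots> < 4 / n" using arith_bound[of t n] assms by simp
  also have "\<dots> \<le> 4 / 9" using assms by (simp add: divide_simps)
  also have "\<dots> = (2/3) ^ 2" by (simp add: power2_eq_square)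
  finally have "w ^ 2 < (2/3) ^ 2" .
  hence "w < 2/3" by (rule power_less_imp_less_base) simp
  thus ?thesis unfolding w_def .
qed

lemma geometric:
  fixes P :: "'a::euclidean_space set"
  assumes poly: "polytope P" and ball: "cball 0 r \<subseteq> P" and r0: "0 < r" and rR: "r \<le> R"
    and Xf: "finite X" and Xc: "P \<subseteq> (\<Union>x\<in>X. cball x 1)"
  shows "R ^ DIM('a) \<le> real (card X) + real (card {F. F facet_of P}) * sqrt (R^2 - r^2) ^ DIM('a)"
proof -
  define Fs where "Fs = {F. F facet_of P}"
  have finF: "finite Fs" using finite_polytope_facets[OF poly] Fs_def by simp
  have ph: "polyhedron P" by (rule polytope_imp_polyhedron[OF poly])
  have cpt: "compact P" by (rule polytope_imp_compact[OF poly])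
  hence bdd: "bounded P" and cl: "closed P" by (auto intro: compact_imp_bounded compact_imp_closed)
  have "\<forall>C\<in>Fs. \<exists>u b. norm u = 1 \<and> P \<subseteq> {x. u \<bullet> x \<le> b} \<and> C = P \<inter> {x. u \<bullet> x = b}"
  proof
    fix C assume "C \<in> Fs"
    then have "C facet_of P" by (simp add: Fs_def)
    then obtain a b where ab: "a \<noteq> 0" "P \<subseteq> {x. a \<bullet> x \<le> b}" "C = P \<inter> {x. a \<bullet> x = b}"
      using facet_of_polyhedron[OF ph] by metis
    define u where "u = (1 / norm a) *\<^sub>R a"
    have na: "norm a > 0" using ab by simp
    have ux: "u \<bullet> x = (a \<bullet> x) / norm a" for x by (simp add: u_def)
    have nu: "norm u = 1" using na by (simp add: u_def)
    have e1: "{x. u \<bullet> x \<le> b / norm a} = {x. a \<bullet> x \<le> b}"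
      using na by (auto simp: ux divide_le_cancel)
    have e2: "{x. u \<bullet> x = b / norm a} = {x. a \<bullet> x = b}"
      using na by (auto simp: ux)
    show "\<exists>u b. norm u = 1 \<and> P \<subseteq> {x. u \<bullet> x \<le> b} \<and> C = P \<inter> {x. u \<bullet> x = b}"
      using nu e1 e2 ab by blast
  qed
  then obtain u \<beta> where u\<beta>: "\<And>C. C \<in> Fs \<Longrightarrow> norm (u C) = 1 \<and> P \<subseteq> {x. u C \<bullet> x \<le> \<beta> C} \<and> C = P \<inter> {x. u C \<bullet> x = \<beta> C}"
    by metis
  have \<beta>r: "r \<le> \<beta> C" if "C \<in> Fs" for C
  proof -
    have n1: "norm (u C) = 1" using u\<beta>[OF that] by blast
    have "r *\<^sub>R u C \<in> cball 0 r" using n1 r0 by simp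
    hence "r *\<^sub>R u C \<in> P" using ball by blast
    hence "u C \<bullet> (r *\<^sub>R u C) \<le> \<beta> C" using u\<beta>[OF that] by blast
    moreover have "u C \<bullet> (r *\<^sub>R u C) = r"
    proof -
      have "u C \<bullet> u C = 1" using n1 by (simp add: norm_eq_1)
      thus ?thesis by simp
    qed
    ultimately show ?thesis by linarith
  qed
  have int0: "0 \<in> interior P"
    by (meson ball ball_subset_cball mem_interior order_trans r0)
  have relint: "rel_interior P = interior P" using int0 rel_interior_nonempty_interior by blast
  have bdry: "P - interior P = \<Union>Fs" using rel_boundary_of_polyhedron[OF ph] relint Fs_def by simp
  define \<rho> where "\<rho> = sqrt (R^2 - r^2)"
  have cov: "cball 0 R \<subseteq> (\<Union>x\<in>X. cball x 1) \<union> (\<Union>C\<in>Fs. cball (r *\<^sub>R u C) \<rho>)"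
  proof
    fix z assume z: "z \<in> cball (0::'a) R"
    show "z \<in> (\<Union>x\<in>X. cball x 1) \<union> (\<Union>C\<in>Fs. cball (r *\<^sub>R u C) \<rho>)"
    proof (cases "z \<in> P")
      case True then show ?thesis using Xc by blast
    next
      case False
      have z0: "z \<noteq> 0" using False int0 interior_subset by blast
      obtain d where d0: "0 < d" and dfr: "(0 + d *\<^sub>R z) \<in> frontier P"
        and dint: "\<And>e. 0 \<le> e \<Longrightarrow> e < d \<Longrightarrow> (0 + e *\<^sub>R z) \<in> interior P"
        using ray_to_frontier[OF bdd int0 z0] by blast
      have frP: "frontier P \<subseteq> P" using cl by (simp add: frontier_subset_closed)
      have d1: "d < 1"
      proof (rule ccontr)
        assume "\<not> d < 1"
        then consider "d = 1" | "1 < d" by linarith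
        then show False
        proof cases
          case 1 then show False using dfr frP False by auto
        next
          case 2 then show False using dint[of 1] interior_subset False by auto
        qed
      qed
      have "d *\<^sub>R z \<in> P - interior P" using dfr frP by (auto simp: frontier_def)
      then obtain C where C: "C \<in> Fs" "d *\<^sub>R z \<in> C" using bdry by blast
      have "u C \<bullet> (d *\<^sub>R z) = \<beta> C" using u\<beta>[OF C(1)] C(2) by blast
      hence eq: "d * (u C \<bullet> z) = \<beta> C" by simp
      have rz: "r \<le> u C \<bullet> z"
      proof -
        have "0 < d * (u C \<bullet> z)" using eq \<beta>r[OF C(1)] r0 by linarith
        hence pos: "0 < u C \<bullet> z" using d0 zero_less_mult_pos by blast
        have "d * (u C \<bullet> z) \<le> 1 * (u C \<bullet> z)"
          using d1 pos by (intro mult_right_mono) auto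
        then show ?thesis using eq \<beta>r[OF C(1)] by linarith
      qed
      have "norm z \<le> R" using z by simp
      then have "z \<in> cball (r *\<^sub>R u C) \<rho>" unfolding \<rho>_def
        using cap_in_ball[of "u C" r R z] u\<beta>[OF C(1)] r0 rR rz by auto
      then show ?thesis using C(1) by blast
    qed
  qed
  define A where "A = (\<Union>x\<in>X. cball x (1::real))"
  define B where "B = (\<Union>C\<in>Fs. cball (r *\<^sub>R u C) \<rho>)"
  have cA: "compact A" unfolding A_def using Xf by (intro compact_UN) auto
  have cB: "compact B" unfolding B_def using finF by (intro compact_UN) auto
  have m1: "measure lborel (cball (0::'a) R) \<le> measure lborel (A \<union> B)"
    apply (rule measure_mono_fmeasurable)
    using cov apply (simp add: A_def B_def)
     apply (rule fmeasurableD[OF fmeasurable_compact], simp)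
    apply (rule fmeasurable_compact, rule compact_Un[OF cA cB])
    done
  have m2: "measure lborel (A \<union> B) \<le> measure lborel A + measure lborel B"
    using fmeasurableD[OF fmeasurable_compact[OF cA]] fmeasurableD[OF fmeasurable_compact[OF cB]]
    by (rule measure_Un_le)
  have m3: "measure lborel A \<le> (\<Sum>x\<in>X. measure lborel (cball x (1::real)))"
    unfolding A_def by (rule measure_UNION_le[OF Xf]) (rule fmeasurableD[OF fmeasurable_compact], simp)
  have m4: "measure lborel B \<le> (\<Sum>C\<in>Fs. measure lborel (cball (r *\<^sub>R u C) \<rho>))"
    unfolding B_def by (rule measure_UNION_le[OF finF]) (rule fmeasurableD[OF fmeasurable_compact], simp)
  have rho0: "0 \<le> \<rho>" unfolding \<rho>_def using r0 rR by (simp add: power_mono)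
  have R0: "0 \<le> R" using r0 rR by simp
  define V where "V = unit_ball_vol (real DIM('a))"
  have V0: "V > 0" unfolding V_def by simp
  have s3: "(\<Sum>x\<in>X. measure lborel (cball x (1::real))) = real (card X) * V"
    by (simp add: content_cball V_def)
  have s4: "(\<Sum>C\<in>Fs. measure lborel (cball (r *\<^sub>R u C) \<rho>)) = real (card Fs) * (V * \<rho> ^ DIM('a))"
    using rho0 by (simp add: content_cball V_def)
  have s0: "measure lborel (cball (0::'a) R) = V * R ^ DIM('a)"
    using R0 by (simp add: content_cball V_def)
  have "V * R ^ DIM('a) \<le> V * (real (card X) + real (card Fs) * \<rho> ^ DIM('a))"
    using m1 m2 m3 m4 s3 s4 s0 by (simp add: algebra_simps)
  hence "R ^ DIM('a) \<le> real (card X) + real (card Fs) * \<rho> ^ DIM('a)"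
    using V0 by simp
  thus ?thesis unfolding Fs_def \<rho>_def .
qed

theorem theorem1p1:
  fixes P :: "'a::euclidean_space set" and r :: real
  assumes "DIM('a) \<ge> 3"
    and "polytope P"
    and "cball 0 r \<subseteq> P"
    and "3 * sqrt 3 / sqrt (DIM('a)) \<le> r" and "r \<le> 1"
    and "3 \<le> covering_number P (cball 0 1)"
    and "real (covering_number P (cball 0 1)) < exp (real DIM('a) / 8)"
  shows "real (card {F. F facet_of P}) >
    (1 / (2 * (1 - r * sqrt (1 - 4 * ln (real (covering_number P (cball 0 1))) / real DIM('a)))))
      powr ((real DIM('a) - 1) / 2)"
proof -
  define n where "n = DIM('a)"
  define N where "N = covering_number P (cball (0::'a) 1)"
  define L where "L = ln (real N)"
  define s where "s = sqrt (1 - 4 * L / real n)"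
  define m where "m = card {F. F facet_of P}"
  have N3: "3 \<le> real N" using assms(6) N_def by simp
  have Nexp: "real N < exp (real n / 8)" using assms(7) N_def n_def by simp
  have L0: "0 < L" unfolding L_def using N3 by simp
  have Ln: "L < real n / 8"
  proof -
    have "ln (real N) < ln (exp (real n / 8))" using Nexp N3 by (subst ln_less_cancel_iff) auto
    thus ?thesis unfolding L_def by simp
  qed
  have n8: "n \<ge> 9"
  proof -
    have "exp 1 < exp (real n / 8)" using exp_le N3 Nexp by linarith
    hence "1 < real n / 8" by simp
    thus ?thesis by simp
  qed
  have npos: "0 < real n" using n8 by simp
  have q: "0 < 4 * L / real n" using L0 npos by simp
  have q2: "4 * L / real n < 1/2" using Ln npos by (simp add: field_simps)
  have s2: "s^2 = 1 - 4 * L / real n" unfolding s_def using q2 by simp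
  have s0: "0 < s" unfolding s_def using q2 by simp
  have s1: "s < 1" unfolding s_def using q by simp
  have r0: "0 < r"
  proof -
    have "0 < 3 * sqrt 3 / sqrt (real DIM('a))" by simp
    thus ?thesis using assms(4) by linarith
  qed
  define R where "R = 1 / s"
  have R1: "1 \<le> R" unfolding R_def using s0 s1 by simp
  have rR: "r \<le> R" using R1 assms(5) by linarith
  have sub: "ball x 1 \<subseteq> (\<lambda>y. x + y) ` cball 0 1" for x :: 'a
  proof
    fix y assume "y \<in> ball x 1"
    then have "y - x \<in> cball 0 1" by (simp add: dist_norm norm_minus_commute)
    then show "y \<in> (\<lambda>y. x + y) ` cball 0 1" by (rule rev_image_eqI) simp
  qed
  have ex: "\<exists>K X. finite X \<and> card X = K \<and> P \<subseteq> (\<Union>x\<in>X. (\<lambda>y. x + y) ` cball (0::'a) 1)"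
  proof -
    have cpt: "compact P" using assms(2) polytope_imp_compact by blast
    have cov: "P \<subseteq> (\<Union>x\<in>P. ball x 1)" by auto
    have opn: "\<And>T. T \<in> P \<Longrightarrow> open (ball T 1)" by simp
    obtain X where X1: "finite X" and X2: "P \<subseteq> (\<Union>x\<in>X. ball x 1)"
      using compactE_image[OF cpt opn cov] by metis
    have X3: "(\<Union>x\<in>X. ball x 1) \<subseteq> (\<Union>x\<in>X. (\<lambda>y. x + y) ` cball (0::'a) 1)"
      using sub by (meson UN_mono order_refl)
    have "finite X \<and> card X = card X \<and> P \<subseteq> (\<Union>x\<in>X. (\<lambda>y. x + y) ` cball (0::'a) 1)"
      using X1 X2 X3 by (meson order_trans)
    thus ?thesis by (intro exI)
  qed
  obtain X where Xf: "finite X" "card X = N" "P \<subseteq> (\<Union>x\<in>X. (\<lambda>y. x + y) ` cball (0::'a) 1)"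
    using LeastI_ex[OF ex] unfolding N_def covering_number_def by blast
  have img: "(\<lambda>y. x + y) ` cball (0::'a) 1 \<subseteq> cball x 1" for x
    by (auto simp: dist_norm)
  have Xc: "P \<subseteq> (\<Union>x\<in>X. cball x 1)" using Xf(3) img by blast
  have geo: "R ^ n \<le> real N + real m * sqrt (R^2 - r^2) ^ n"
    using geometric[OF assms(2) assms(3) r0 rR Xf(1) Xc] Xf(2) n_def m_def by simp
  define a where "a = r * s"
  have a0: "0 < a" unfolding a_def using r0 s0 by simp
  have a1: "a < 1"
  proof -
    have "r * s \<le> 1 * s" using assms(5) s0 by (intro mult_right_mono) auto
    thus ?thesis unfolding a_def using s1 by linarith
  qed
  have sR: "s * R = 1" unfolding R_def using s0 by simp
  have srho: "s * sqrt (R^2 - r^2) = sqrt (1 - a^2)"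
  proof -
    have "s * sqrt (R^2 - r^2) = sqrt (s^2) * sqrt (R^2 - r^2)" using s0 by simp
    also have "\<dots> = sqrt (s^2 * (R^2 - r^2))" by (simp add: real_sqrt_mult)
    also have "s^2 * (R^2 - r^2) = (s * R)^2 - (r * s)^2" by (simp add: algebra_simps power2_eq_square)
    also have "\<dots> = 1 - a^2" using sR a_def by simp
    finally show ?thesis .
  qed
  have key: "1 \<le> real N * s ^ n + real m * sqrt (1 - a^2) ^ n"
  proof -
    have "s ^ n * R ^ n \<le> s ^ n * (real N + real m * sqrt (R^2 - r^2) ^ n)"
      using geo s0 by (intro mult_left_mono) auto
    moreover have "s ^ n * R ^ n = 1" by (metis power_mult_distrib sR power_one)
    moreover have "s ^ n * (real N + real m * sqrt (R^2 - r^2) ^ n) = real N * s ^ n + real m * (s * sqrt (R^2 - r^2)) ^ n"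
      by (simp add: power_mult_distrib algebra_simps)
    ultimately show ?thesis using srho by simp
  qed
  have sn: "real N * s ^ n \<le> 1/3"
  proof -
    have "ln (s^2) \<le> s^2 - 1" using ln_le_minus_one s0 by simp
    moreover have "ln (s^2) = 2 * ln s" using s0 by (simp add: ln_realpow)
    ultimately have h1: "2 * ln s \<le> - (4 * L / real n)" using s2 by linarith
    have "real n * (2 * ln s) \<le> real n * (- (4 * L / real n))"
      using h1 npos by (intro mult_left_mono) auto
    hence h2: "real n * ln s \<le> - 2 * L" using npos by (simp add: field_simps)
    have "ln (real N ^ 2 * s ^ n) = 2 * L + real n * ln s"
      using N3 s0 by (simp add: ln_mult ln_realpow L_def)
    hence "ln (real N ^ 2 * s ^ n) \<le> 0" using h2 by linarith
    hence h3: "real N ^ 2 * s ^ n \<le> 1" using N3 s0 by simp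
    have "real N * (real N * s ^ n) \<le> real N * (1 / 3)"
    proof -
      have "real N * (real N * s ^ n) \<le> 1" using h3 by (simp add: power2_eq_square mult.assoc)
      also have "1 \<le> real N * (1/3)" using N3 by simp
      finally show ?thesis .
    qed
    thus ?thesis using N3 by (simp add: mult_le_cancel_left_pos)
  qed
  have mq: "2/3 \<le> real m * sqrt (1 - a^2) ^ n" using key sn by linarith
  define t where "t = (1 - a) / 2"
  have t0: "0 < t" "t < 1/2" unfolding t_def using a0 a1 by auto
  have at: "1 - a^2 = 4 * t * (1 - t)" unfolding t_def power2_eq_square by (simp add: field_simps)
  have Beq: "(1 / (2 * (1 - r * sqrt (1 - 4 * ln (real (covering_number P (cball 0 1))) / real DIM('a)))))
      powr ((real DIM('a) - 1) / 2) = (1 / (4 * t)) powr ((real n - 1) / 2)"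
  proof -
    have e4: "4 * t = 2 * (1 - a)" unfolding t_def by simp
    show ?thesis unfolding e4 a_def s_def L_def N_def n_def by simp
  qed
  have fin: "(1 / (4 * t)) powr ((real n - 1) / 2) * sqrt (4 * t * (1 - t)) ^ n < 2 / 3"
    using final_ineq[OF t0 n8] .
  show ?thesis
  proof (rule ccontr)
    assume "\<not> ?thesis"
    hence "real m \<le> (1 / (4 * t)) powr ((real n - 1) / 2)" using Beq m_def by simp
    then have "real m * sqrt (1 - a^2) ^ n \<le> (1 / (4 * t)) powr ((real n - 1) / 2) * sqrt (1 - a^2) ^ n"
    proof (rule mult_right_mono)
      have "a^2 \<le> 1" using power_le_one[of a 2] a0 a1 by simp
      thus "0 \<le> sqrt (1 - a^2) ^ n" by simp
    qed
    moreover have "(1 / (4 * t)) powr ((real n - 1) / 2) * sqrt (1 - a^2) ^ n = (1 / (4 * t)) powr ((real n - 1) / 2) * sqrt (4 * t * (1 - t)) ^ n" by (simp only: at)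
    ultimately show False using fin mq by linarith
  qed
qed

end
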